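(* Let $T:[a,b]\times[c,d]\to\mathbb{R}$ be the function constructed from a generating function $\phi$ as described in the context. If there is $y_0\in[c,d]$ such that $x\mapsto\phi(x,y_0)$ is non-constant on $[a_0,a_1]$, then $T$ is not of bounded variation in the sense of Arzelà on $[a,b]\times[c,d]$.
   Context: Let $a<b$, $c<d$. Set $a_0=a$ and $a_n=a+(b-a)(\tfrac12+\tfrac14+\dots+\tfrac1{2^n})$ for $n\in\mathbb{N}$, so $a_n\uparrow b$. Let $\phi:[a_0,a_1]\times[c,d]\to\mathbb{R}$ be continuous with $\phi(a_0,y)=\phi(a_1,y)$ for all $y\in[c,d]$ (the generating function). For $n\ge1$ let $\psi_n:[a_{n-1},a_n]\to[a_0,a_1]$ be the increasing affine bijection $\psi_n(x)=\frac{2^n[(a_1-a_0)x+a_0a_n-a_1a_{n-1}]}{b-a}$. Let $F_1=\phi$ on $[a_0,a_1]\times[c,d]$ and for $n\ge2$, $F_n(x,y)=\frac1n\phi(\psi_n(x),y)+\frac{n-1}{n}\phi(a_0,y)$ for $(x,y)\in[a_{n-1},a_n]\times[c,d]$. Define $T_n(x,y)=F_k(x,y)$ for $(x,y)\in[a_{k-1},a_k]\times[c,d]$, $k=1,\dots,n$, and $T_n(x,y)=F_n(a_n,y)$ for $(x,y)\in[a_n,b]\times[c,d]$; and $T(x,y)=\lim_{n\to\infty}T_n(x,y)$. A function $f:[a,b]\times[c,d]\to\mathbb{R}$ is of bounded variation in the sense of Arzelà if there is $K$ such that for all $m$ and all $a=x_0\le\dots\le x_m=b$, $c=y_0\le\dots\le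 y_m=d$, $\sum_{i=0}^{m-1}|f(x_{i+1},y_{i+1})-f(x_i,y_i)|\le K$. *)

theory Defs
  imports "HOL-Analysis.Analysis"
begin

definition apt :: "real \<Rightarrow> real \<Rightarrow> nat \<Rightarrow> real" where
  "apt a b n = a + (b - a) * (\<Sum>i\<in>{1..n}. 1 / 2 ^ i)"

text \<open>psi_n : [a_{n-1}, a_n] -> [a_0, a_1], the increasing affine bijection.\<close>
definition psi :: "real \<Rightarrow> real \<Rightarrow> nat \<Rightarrow> real \<Rightarrow> real" where
  "psi a b n x = 2 ^ n * ((apt a b 1 - apt a b 0) * x + apt a b 0 * apt a b n
                           - apt a b 1 * apt a b (n - 1)) / (b - a)"

definition Fgen :: "real \<Rightarrow> real \<Rightarrow> (real \<Rightarrow> real \<Rightarrow> real) \<Rightarrow> nat \<Rightarrow> real \<Rightarrow> real \<Rightarrow> real" where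
  "Fgen a b \<phi> n x y = (if n = 1 then \<phi> x y
     else (1 / real n) * \<phi> (psi a b n x) y + (real n - 1) / real n * \<phi> (apt a b 0) y)"

text \<open>T_n (n >= 1): equal to F_k on [a_{k-1}, a_k] for k = 1..n (we take the least such k;
  adjacent pieces agree at common endpoints), and F_n(a_n, y) on [a_n, b].\<close>
definition Tn :: "real \<Rightarrow> real \<Rightarrow> (real \<Rightarrow> real \<Rightarrow> real) \<Rightarrow> nat \<Rightarrow> real \<Rightarrow> real \<Rightarrow> real" where
  "Tn a b \<phi> n x y = (if x \<le> apt a b n
      then Fgen a b \<phi> (LEAST k. 1 \<le> k \<and> x \<le> apt a b k) x y
      else Fgen a b \<phi> n (apt a b n) y)"

definition Tlim :: "real \<Rightarrow> real \<Rightarrow> (real \<Rightarrow> real \<Rightarrow> real) \<Rightarrow> real \<Rightarrow> real \<Rightarrow> real" where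
  "Tlim a b \<phi> x y = lim (\<lambda>n. Tn a b \<phi> (Suc n) x y)"

definition arzela_bv :: "(real \<Rightarrow> real \<Rightarrow> real) \<Rightarrow> real \<Rightarrow> real \<Rightarrow> real \<Rightarrow> real \<Rightarrow> bool" where
  "arzela_bv f a b c d \<longleftrightarrow> (\<exists>K. \<forall>(m::nat) (xs::nat \<Rightarrow> real) (ys::nat \<Rightarrow> real).
      xs 0 = a \<and> xs m = b \<and> ys 0 = c \<and> ys m = d \<and>
      (\<forall>i<m. xs i \<le> xs (Suc i) \<and> ys i \<le> ys (Suc i)) \<longrightarrow>
      (\<Sum>i<m. \<bar>f (xs (Suc i)) (ys (Suc i)) - f (xs i) (ys i)\<bar>) \<le> K)"

end

theory Submission
  imports Defs "HOL-Analysis.Harmonic_Numbers"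
begin

lemma apt_closed: "apt a b n = b - (b - a) / 2 ^ n"
proof (induction n)
  case 0 then show ?case by (simp add: apt_def)
next
  case (Suc n)
  have "apt a b (Suc n) = apt a b n + (b - a) / 2 ^ Suc n"
    by (simp add: apt_def algebra_simps sum.cl_ivl_Suc)
  with Suc show ?case by (simp add: field_simps)
qed

lemma apt_le: "a < b \<Longrightarrow> m \<le> n \<Longrightarrow> apt a b m \<le> apt a b n"
  unfolding apt_closed
  by (simp add: frac_le)

lemma apt_lt_b: "a < b \<Longrightarrow> apt a b n < b"
  unfolding apt_closed by simp

lemma psi_Suc: "a < b \<Longrightarrow> psi a b (Suc j) x = b + 2 ^ j * (x - b)"
  unfolding psi_def apt_closed
  by (simp add: field_simps)

lemma least_k:
  assumes "a < b" "1 \<le> k" "apt a b (k - 1) < x" "x \<le> apt a b k"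
  shows "(LEAST k'. 1 \<le> k' \<and> x \<le> apt a b k') = k"
proof (rule Least_equality)
  show "1 \<le> k \<and> x \<le> apt a b k" using assms by simp
next
  fix y assume y: "1 \<le> y \<and> x \<le> apt a b y"
  show "k \<le> y"
  proof (rule ccontr)
    assume "\<not> k \<le> y"
    then have "y \<le> k - 1" by simp
    then have "apt a b y \<le> apt a b (k - 1)" using apt_le assms(1) by blast
    with y assms(3) show False by simp
  qed
qed

lemma Tlim_val:
  assumes "a < b" "1 \<le> k" "apt a b (k - 1) < x" "x \<le> apt a b k"
  shows "Tlim a b \<phi> x y = Fgen a b \<phi> k x y"
proof -
  have "\<forall>n\<ge>k. Tn a b \<phi> (Suc n) x y = Fgen a b \<phi> k x y"
  proof (intro allI impI)
    fix n assume "k \<le> n"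
    then have "apt a b k \<le> apt a b (Suc n)" using apt_le assms(1) by simp
    then have "x \<le> apt a b (Suc n)" using assms(4) by simp
    then show "Tn a b \<phi> (Suc n) x y = Fgen a b \<phi> k x y"
      unfolding Tn_def using least_k[OF assms] by simp
  qed
  then have "(\<lambda>n. Tn a b \<phi> (Suc n) x y) \<longlonglongrightarrow> Fgen a b \<phi> k x y"
    by (intro tendsto_eventually) (auto simp: eventually_sequentially)
  then show ?thesis unfolding Tlim_def by (rule limI)
qed

lemma hA: "(t::real) > 0 \<Longrightarrow> a < p \<Longrightarrow> b - (b - a) / t < b + (p - b) / t"
proof -
  assume t: "t > 0" and h: "a < p"
  have "(a - b) / t < (p - b) / t" using t h by (intro divide_strict_right_mono) auto
  moreover have "b - (b - a) / t = b + (a - b) / t" by (simp add: diff_divide_distrib)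
  ultimately show ?thesis by linarith
qed

lemma hB: "(t::real) > 0 \<Longrightarrow> 2 * p \<le> a + b \<Longrightarrow> b + (p - b) / t \<le> b - (b - a) / (2 * t)"
proof -
  assume t: "t > 0" and h: "2 * p \<le> a + b"
  have "b + (p - b) / t - (b - (b - a) / (2 * t)) = (2 * p - a - b) / (2 * t)"
    using t by (simp add: field_simps)
  also have "\<dots> \<le> 0" using t h by (intro divide_nonpos_pos) auto
  finally show ?thesis by simp
qed

lemma hC: "(t::real) \<ge> 1 \<Longrightarrow> a \<le> p \<Longrightarrow> p \<le> b \<Longrightarrow> a \<le> b + (p - b) / t \<and> b + (p - b) / t \<le> b"
proof -
  assume t: "t \<ge> 1" and h: "a \<le> p" "p \<le> b"
  have "(b - p) / t \<le> (b - p) / 1" using t h by (intro divide_left_mono) auto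
  moreover have "0 \<le> (b - p) / t" using t h by simp
  moreover have "(p - b) / t = - ((b - p) / t)" by (simp add: minus_divide_left)
  ultimately show ?thesis using h by auto
qed

theorem mainTheorem9:
  fixes a b c d :: real and \<phi> :: "real \<Rightarrow> real \<Rightarrow> real"
  assumes "a < b" and "c < d"
    and "continuous_on ({apt a b 0..apt a b 1} \<times> {c..d}) (\<lambda>(x, y). \<phi> x y)"
    and "\<And>y. y \<in> {c..d} \<Longrightarrow> \<phi> (apt a b 0) y = \<phi> (apt a b 1) y"
    and "\<exists>y0\<in>{c..d}. \<exists>x1\<in>{apt a b 0..apt a b 1}. \<exists>x2\<in>{apt a b 0..apt a b 1}.
           \<phi> x1 y0 \<noteq> \<phi> x2 y0"
  shows "\<not> arzela_bv (Tlim a b \<phi>) a b c d"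
proof
  assume bv: "arzela_bv (Tlim a b \<phi>) a b c d"
  then obtain K where K: "\<And>m xs ys. xs 0 = a \<Longrightarrow> xs m = b \<Longrightarrow> ys 0 = c \<Longrightarrow> ys m = d \<Longrightarrow>
      (\<forall>i<m. xs i \<le> xs (Suc i) \<and> ys i \<le> ys (Suc i)) \<Longrightarrow>
      (\<Sum>i<m. \<bar>Tlim a b \<phi> (xs (Suc i)) (ys (Suc i)) - Tlim a b \<phi> (xs i) (ys i)\<bar>) \<le> K"
    unfolding arzela_bv_def by blast
  have a0: "apt a b 0 = a" by (simp add: apt_closed)
  have a1: "apt a b 1 = (a + b) / 2" by (simp add: apt_closed field_simps)
  obtain y0 x1 x2 where y0: "y0 \<in> {c..d}" and x1: "x1 \<in> {a..(a+b)/2}" and x2: "x2 \<in> {a..(a+b)/2}"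
    and ne: "\<phi> x1 y0 \<noteq> \<phi> x2 y0"
  proof -
    from assms(5) obtain y0 x1 x2 where "y0 \<in> {c..d}" "x1 \<in> {apt a b 0..apt a b 1}" "x2 \<in> {apt a b 0..apt a b 1}"
      "\<phi> x1 y0 \<noteq> \<phi> x2 y0" by blast
    then show ?thesis using that unfolding a0 a1 by blast
  qed
  have phi1: "\<phi> ((a+b)/2) y0 = \<phi> a y0" using assms(4)[OF y0] unfolding a0 a1 by simp
  obtain p where p: "a < p" "p \<le> (a+b)/2" and pne: "\<phi> p y0 \<noteq> \<phi> a y0"
  proof (cases "\<phi> x1 y0 = \<phi> a y0")
    case True
    then have "\<phi> x2 y0 \<noteq> \<phi> a y0" using ne by simp
    moreover then have "x2 \<noteq> a" by auto
    ultimately show ?thesis using x2 by (intro that[of x2]) auto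
  next
    case False
    moreover then have "x1 \<noteq> a" by auto
    ultimately show ?thesis using x1 by (intro that[of x1]) auto
  qed
  define \<delta> where "\<delta> = \<bar>\<phi> p y0 - \<phi> a y0\<bar>"
  have dpos: "\<delta> > 0" using pne by (simp add: \<delta>_def)
  have TA: "Tlim a b \<phi> (apt a b (Suc j)) y0 = \<phi> a y0" for j
  proof -
    have "apt a b j < apt a b (Suc j)" using assms(1) by (simp add: apt_closed field_simps)
    then have "Tlim a b \<phi> (apt a b (Suc j)) y0 = Fgen a b \<phi> (Suc j) (apt a b (Suc j)) y0"
      using Tlim_val[OF assms(1), of "Suc j"] by simp
    also have "\<dots> = \<phi> a y0"
    proof (cases "j = 0")
      case True
      have "\<phi> (apt a b 1) y0 = \<phi> a y0" using phi1 unfolding a1[symmetric] .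
      then show ?thesis using True by (simp add: Fgen_def)
    next
      case False
      have "psi a b (Suc j) (apt a b (Suc j)) = (a+b)/2"
        using assms(1) by (simp add: psi_Suc apt_closed field_simps)
      then have ps: "\<phi> (psi a b (Suc j) (apt a b (Suc j))) y0 = \<phi> a y0" using phi1 by (simp only:)
      have gen0: "n \<noteq> 0 \<Longrightarrow> 1 / n * X + (n - 1) / n * X = X" for X n :: real
        by (simp add: field_simps)
      have gen: "1 / real (Suc j) * X + (real (Suc j) - 1) / real (Suc j) * X = X" for X :: real
        by (rule gen0) simp
      show ?thesis using False unfolding Fgen_def ps a0 using gen by simp
    qed
    finally show ?thesis .
  qed
  have TQ: "Tlim a b \<phi> (b + (p - b) / 2 ^ Suc j) y0 = \<phi> a y0 + (\<phi> p y0 - \<phi> a y0) / (real j + 2)" for j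
  proof -
    have pos: "(0::real) < 2 ^ j" by simp
    have "apt a b (Suc j) < b + (p - b) / 2 ^ Suc j"
      unfolding apt_closed by (rule hA) (use p in auto)
    moreover have "b + (p - b) / 2 ^ Suc j \<le> apt a b (Suc (Suc j))"
      unfolding apt_closed power_Suc[of 2 "Suc j"] by (rule hB) (use p in auto)
    ultimately have eq1: "Tlim a b \<phi> (b + (p - b) / 2 ^ Suc j) y0 = Fgen a b \<phi> (Suc (Suc j)) (b + (p - b) / 2 ^ Suc j) y0"
      using Tlim_val[OF assms(1), of "Suc (Suc j)"] by simp
    have ps: "psi a b (Suc (Suc j)) (b + (p - b) / 2 ^ Suc j) = p"
      using assms(1) by (simp add: psi_Suc)
    have gen0: "n \<noteq> 0 \<Longrightarrow> 1 / n * P + (n - 1) / n * A = A + (P - A) / n" for P A n :: real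
      by (simp add: field_simps)
    have "real (Suc (Suc j)) = real j + 2" by simp
    then show ?thesis unfolding eq1 Fgen_def ps a0 using gen0[of "real (Suc (Suc j))"] by simp
  qed
  have "\<forall>\<^sub>F n in sequentially. K / \<delta> + 2 \<le> (harm n :: real)"
    using harm_at_top by (simp add: filterlim_at_top)
  then obtain N where N: "K / \<delta> + 2 \<le> (harm (Suc N) :: real)"
    unfolding eventually_sequentially by (metis le_add2 plus_1_eq_Suc)
  define m where "m = 2 * N + 1"
  define xs where "xs i = (if i = 0 then a else if i \<ge> m then b else if even i then b + (p - b) / 2 ^ (i div 2) else apt a b (i div 2 + 1))" for i
  define ys where "ys i = (if i = 0 then c else if i \<ge> m then d else y0)" for i
  define f where "f i = \<bar>Tlim a b \<phi> (xs (Suc i)) (ys (Suc i)) - Tlim a b \<phi> (xs i) (ys i)\<bar>" for i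
  have xsab: "a \<le> xs i \<and> xs i \<le> b" for i
  proof -
    have "(1::real) \<le> 2 ^ (i div 2)" by simp
    then have "a \<le> b + (p - b) / 2 ^ (i div 2) \<and> b + (p - b) / 2 ^ (i div 2) \<le> b"
      using p assms(1) by (intro hC) auto
    then show ?thesis using p assms(1) apt_lt_b[OF assms(1), of "i div 2 + 1"]
        apt_le[OF assms(1), of 0 "i div 2 + 1"] a0
      by (auto simp: xs_def field_simps)
  qed
  have mono: "\<forall>i<m. xs i \<le> xs (Suc i) \<and> ys i \<le> ys (Suc i)"
  proof (intro allI impI conjI)
    fix i assume i: "i < m"
    show "ys i \<le> ys (Suc i)" using y0 i by (auto simp: ys_def)
    show "xs i \<le> xs (Suc i)"
    proof (cases "i = 0 \<or> Suc i \<ge> m")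
      case True then show ?thesis using xsab[of i] xsab[of "Suc i"] i
        by (auto simp: xs_def)
    next
      case False
      then have i0: "i \<noteq> 0" and im: "\<not> Suc i \<ge> m" by auto
      have pos: "(0::real) < 2 ^ (i div 2)" by simp
      show ?thesis
      proof (cases "even i")
        case True
        then obtain j where j: "i = 2 * j" by blast
        have "b + (p - b) / 2 ^ j \<le> b - (b - a) / 2 ^ (j + 1)"
          using hB[of "2 ^ j" p a b] p by simp
        then show ?thesis using i0 im i j by (simp add: xs_def apt_closed)
      next
        case False
        then obtain j where j: "i = 2 * j + 1" using oddE by blast
        have "b - (b - a) / 2 ^ (j + 1) \<le> b + (p - b) / 2 ^ (j + 1)"
          using hA[of "2 ^ (j+1)" a p b] p by simp
        moreover have "Suc i div 2 = j + 1" using j by simp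
        ultimately show ?thesis using i0 im i j by (simp add: xs_def apt_closed)
      qed
    qed
  qed
  have sumK: "(\<Sum>i<m. f i) \<le> K"
    unfolding f_def by (rule K) (use mono in \<open>auto simp: xs_def ys_def m_def\<close>)
  have fodd: "f (2 * j + 1) = \<delta> / (real j + 2)" if "j < N" for j
  proof -
    have "xs (Suc (2 * j + 1)) = b + (p - b) / 2 ^ Suc j" using that by (simp add: xs_def m_def)
    moreover have "ys (Suc (2 * j + 1)) = y0" using that by (simp add: ys_def m_def)
    moreover have "xs (2 * j + 1) = apt a b (Suc j)" using that by (simp add: xs_def m_def)
    moreover have "ys (2 * j + 1) = y0" using that by (simp add: ys_def m_def)
    ultimately show ?thesis unfolding f_def using TA TQ
      by (simp add: \<delta>_def abs_divide)
  qed
  have sub: "(\<Sum>j<n. f (2 * j + 1)) \<le> (\<Sum>i<2 * n + 1. f i)" for n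
  proof (induction n)
    case 0 then show ?case by (simp add: f_def)
  next
    case (Suc n)
    have "(\<Sum>i<2 * Suc n + 1. f i) = (\<Sum>i<2 * n + 1. f i) + f (2 * n + 1) + f (2 * n + 2)"
      by (simp add: numeral_2_eq_2)
    moreover have "0 \<le> f (2 * n + 2)" by (simp add: f_def)
    ultimately show ?case using Suc by simp
  qed
  have harmeq: "(\<Sum>j<n. 1 / (real j + 2)) = harm (Suc n) - 1" for n
  proof (induction n)
    case 0 then show ?case by (simp add: harm_def)
  next
    case (Suc n)
    have "real (Suc (Suc n)) = real n + 2" by simp
    then show ?case using Suc by (simp add: harm_Suc inverse_eq_divide del: of_nat_Suc)
  qed
  have "(\<Sum>j<N. f (2 * j + 1)) = \<delta> * (harm (Suc N) - 1)"
  proof -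
    have "(\<Sum>j<N. f (2 * j + 1)) = (\<Sum>j<N. \<delta> * (1 / (real j + 2)))"
      using fodd by (intro sum.cong) auto
    also have "\<dots> = \<delta> * (\<Sum>j<N. 1 / (real j + 2))" by (rule sum_distrib_left[symmetric])
    finally show ?thesis unfolding harmeq[of N] .
  qed
  also have "\<delta> * (harm (Suc N) - 1) \<ge> \<delta> * (K / \<delta> + 1)"
    using N dpos by (intro mult_left_mono) auto
  moreover have "\<delta> * (K / \<delta> + 1) = K + \<delta>" using dpos by (simp add: field_simps)
  ultimately have "K + \<delta> \<le> (\<Sum>i<m. f i)" using sub[of N] by (simp add: m_def)
  with sumK dpos show False by simp
qed

end
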